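(* Fix $m\ge1$ and $n\ge0$. For every formula $\phi\in\mathcal{L}^m$ and every label $x$: if $\phi$ is valid (true at every world of every $\mathsf{Ldm}_{n}^{m}$-model), then the sequent $x:\phi$ is derivable in the calculus $\mathsf{Ldm}_{n}^{m}\mathsf{L}$ (which contains no cut rule).
   Context: Language. $Ag=\{1,\dots,m\}$, $Var$ a countable set of propositional variables; formulas of $\mathcal{L}^m$: $\phi ::= p \mid \overline{p} \mid (\phi\wedge\phi) \mid (\phi\vee\phi) \mid \Box\phi \mid \Diamond\phi \mid [i]\phi \mid \langle i\rangle\phi$. Models. An $\mathsf{Ldm}_{n}^{m}$-frame is $(W,\{\mathcal{R}_i\}_{i\in Ag})$ with $W\neq\emptyset$ and: (C1) each $\mathcal{R}_i\subseteq W\times W$ is an equivalence relation; (C2) for all $u_1,\dots,u_m\in W$, $\bigcap_{i\in Ag}\mathcal{R}_i(u_i)\neq\emptyset$, where $\mathcal{R}_i(w)=\{v:(w,v)\in\mathcal{R}_i\}$; (C3) only if $n>0$: for each $i\in Ag$ and all $w_0,\dots,w_n\in W$ there are $0\le k<j\le n$ with $(w_k,w_j)\in\mathcal{R}_i$. A model adds a valuation $V:Var\to\mathcal{P}(W)$. Satisfaction: $w\Vdash p$ iff $w\in V(p)$; $w\Vdash\overline{p}$ iff $w\notin V(p)$; $\wedge,\vee$ as usual; $w\Vdash\Box\phi$ iff $u\Vdash\phi$ for all $u\in W$; $w\Vdash\Diamond\phi$ iff $u\Vdash\phi$ for some $u\in W$; $w\Vdash[i]\phi$ iff $u\Vdash\phi$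 for all $u\in\mathcal{R}_i(w)$; $w\Vdash\langle i\rangle\phi$ iff $u\Vdash\phi$ for some $u\in\mathcal{R}_i(w)$. Labelled sequents $\mathcal{R},\Gamma$: $\mathcal{R}$ a multiset of relational atoms $\mathcal{R}_ixy$, $\Gamma$ a multiset of labelled formulas $x:\phi$. Derivations are finite trees whose leaves are $(\mathsf{id})$ instances. Rules of $\mathsf{Ldm}_{n}^{m}\mathsf{L}$ (premise(s) / conclusion): $(\mathsf{id})$: / $\mathcal{R}, w:p, w:\overline{p},\Gamma$. $(\wedge)$: $\mathcal{R}, w:\phi\wedge\psi, w:\phi,\Gamma$ and $\mathcal{R}, w:\phi\wedge\psi, w:\psi,\Gamma$ / $\mathcal{R}, w:\phi\wedge\psi,\Gamma$. $(\vee)$: $\mathcal{R}, w:\phi\vee\psi, w:\phi, w:\psi,\Gamma$ / $\mathcal{R}, w:\phi\vee\psi,\Gamma$. $(\Box)$: $\mathcal{R}, w:\Box\phi, v:\phi,\Gamma$ / $\mathcal{R}, w:\Box\phi,\Gamma$ ($v$ fresh). $(\Diamond)$: $\mathcal{R}, w:\Diamond\phi, u:\phi,\Gamma$ / $\mathcal{R}, w:\Diamond\phi,\Gamma$. $(\mathsf{IOA})$: $\mathcal{R},\mathcal{R}_1u_1v,\dots,\mathcal{R}_mu_mv,\Gamma$ / $\mathcal{R},\Gamma$ ($v$ fresh). $([i])$: $\mathcal{R},\mathcal{R}_iwv, w:[i]\phi, v:\phi,\Gamma$ / $\mathcal{R}, w:[i]\phi,\Gamma$ ($v$ fresh). $(\mathsf{Pr}_i)$: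 $\mathcal{R}, w:\langle i\rangle\phi, u:\phi,\Gamma$ / $\mathcal{R}, w:\langle i\rangle\phi,\Gamma$, applicable only if $w=u$ or there are labels $w=z_0,\dots,z_k=u$ ($k\ge1$) with $\mathcal{R}_iz_lz_{l+1}\in\mathcal{R}$ or $\mathcal{R}_iz_{l+1}z_l\in\mathcal{R}$ for each $l<k$. $(\mathsf{APC}^i_n)$ (only if $n>0$): premises $\mathcal{R},\mathcal{R}_iw_kw_j,\Gamma$ for all $0\le k\le n-1$, $k+1\le j\le n$ / $\mathcal{R},\Gamma$. "Fresh" means not occurring in the conclusion. One copy of $([i])$, $(\mathsf{Pr}_i)$, $(\mathsf{APC}^i_n)$ for each $i\in Ag$. *)

theory Defs
  imports Main "HOL-Library.Multiset"
begin

datatype fm =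
    Pos nat
  | Neg nat
  | Conj fm fm
  | Disj fm fm
  | Box fm
  | Dia fm
  | Stit nat fm
  | DStit nat fm

fun agents :: "fm \<Rightarrow> nat set" where
  "agents (Pos p) = {}"
| "agents (Neg p) = {}"
| "agents (Conj a b) = agents a \<union> agents b"
| "agents (Disj a b) = agents a \<union> agents b"
| "agents (Box a) = agents a"
| "agents (Dia a) = agents a"
| "agents (Stit i a) = insert i (agents a)"
| "agents (DStit i a) = insert i (agents a)"

definition in_lang :: "nat \<Rightarrow> fm \<Rightarrow> bool" where
  "in_lang m \<phi> \<longleftrightarrow> agents \<phi> \<subseteq> {1..m}"

definition ldm_frame :: "nat \<Rightarrow> nat \<Rightarrow> 'w set \<Rightarrow> (nat \<Rightarrow> ('w \<times> 'w) set) \<Rightarrow> bool" where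
  "ldm_frame m n W R \<longleftrightarrow>
     W \<noteq> {} \<and>
     (\<forall>i\<in>{1..m}. equiv W (R i)) \<and>
     (\<forall>u. (\<forall>i\<in>{1..m}. u i \<in> W) \<longrightarrow> (\<exists>v\<in>W. \<forall>i\<in>{1..m}. (u i, v) \<in> R i)) \<and>
     (n > 0 \<longrightarrow> (\<forall>i\<in>{1..m}. \<forall>ws. (\<forall>k\<le>n. ws k \<in> W) \<longrightarrow>
          (\<exists>k j. k < j \<and> j \<le> n \<and> (ws k, ws j) \<in> R i)))"

fun sat :: "'w set \<Rightarrow> (nat \<Rightarrow> ('w \<times> 'w) set) \<Rightarrow> (nat \<Rightarrow> 'w set) \<Rightarrow> 'w \<Rightarrow> fm \<Rightarrow> bool" where
  "sat W R V w (Pos p) = (w \<in> V p)"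
| "sat W R V w (Neg p) = (w \<notin> V p)"
| "sat W R V w (Conj a b) = (sat W R V w a \<and> sat W R V w b)"
| "sat W R V w (Disj a b) = (sat W R V w a \<or> sat W R V w b)"
| "sat W R V w (Box a) = (\<forall>u\<in>W. sat W R V u a)"
| "sat W R V w (Dia a) = (\<exists>u\<in>W. sat W R V u a)"
| "sat W R V w (Stit i a) = (\<forall>u. (w, u) \<in> R i \<longrightarrow> sat W R V u a)"
| "sat W R V w (DStit i a) = (\<exists>u. (w, u) \<in> R i \<and> sat W R V u a)"

text \<open>Validity: truth at every world of every Ldm^m_n-model. HOL cannot quantify
over all types inside a definition; worlds are taken from the countable type nat.\<close>

definition valid :: "nat \<Rightarrow> nat \<Rightarrow> fm \<Rightarrow> bool" where
  "valid m n \<phi> \<longleftrightarrow>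
     (\<forall>(W :: nat set) R (V :: nat \<Rightarrow> nat set). ldm_frame m n W R \<longrightarrow>
        (\<forall>w\<in>W. sat W R V w \<phi>))"

text \<open>Labels are natural numbers. A relational atom R_i x y is the triple (i, x, y);
a labelled formula x:phi is the pair (x, phi).\<close>

type_synonym ratom = "nat \<times> nat \<times> nat"
type_synonym lfm = "nat \<times> fm"

definition labels :: "ratom multiset \<Rightarrow> lfm multiset \<Rightarrow> nat set" where
  "labels Rs G = (\<Union>(i,x,y)\<in>set_mset Rs. {x, y}) \<union> fst ` set_mset G"

definition rel_conn :: "nat \<Rightarrow> ratom multiset \<Rightarrow> (nat \<times> nat) set" where
  "rel_conn i Rs = {(x, y). (i, x, y) \<in># Rs \<or> (i, y, x) \<in># Rs}"

inductive derivable :: "nat \<Rightarrow> nat \<Rightarrow> ratom multiset \<Rightarrow> lfm multiset \<Rightarrow> bool"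
  for m n :: nat where
  id: "derivable m n Rs ({#(w, Pos p), (w, Neg p)#} + G)"
| conj: "derivable m n Rs ({#(w, Conj a b), (w, a)#} + G) \<Longrightarrow>
         derivable m n Rs ({#(w, Conj a b), (w, b)#} + G) \<Longrightarrow>
         derivable m n Rs (add_mset (w, Conj a b) G)"
| disj: "derivable m n Rs ({#(w, Disj a b), (w, a), (w, b)#} + G) \<Longrightarrow>
         derivable m n Rs (add_mset (w, Disj a b) G)"
| box: "v \<notin> labels Rs (add_mset (w, Box a) G) \<Longrightarrow>
        derivable m n Rs ({#(w, Box a), (v, a)#} + G) \<Longrightarrow>
        derivable m n Rs (add_mset (w, Box a) G)"
| dia: "derivable m n Rs ({#(w, Dia a), (u, a)#} + G) \<Longrightarrow>
        derivable m n Rs (add_mset (w, Dia a) G)"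
| ioa: "v \<notin> labels Rs G \<Longrightarrow>
        derivable m n (Rs + mset (map (\<lambda>i. (i, u i, v)) [1..<Suc m])) G \<Longrightarrow>
        derivable m n Rs G"
| stit: "i \<in> {1..m} \<Longrightarrow> v \<notin> labels Rs (add_mset (w, Stit i a) G) \<Longrightarrow>
         derivable m n (add_mset (i, w, v) Rs) ({#(w, Stit i a), (v, a)#} + G) \<Longrightarrow>
         derivable m n Rs (add_mset (w, Stit i a) G)"
| pr: "i \<in> {1..m} \<Longrightarrow> (w, u) \<in> (rel_conn i Rs)\<^sup>* \<Longrightarrow>
       derivable m n Rs ({#(w, DStit i a), (u, a)#} + G) \<Longrightarrow>
       derivable m n Rs (add_mset (w, DStit i a) G)"
| apc: "n > 0 \<Longrightarrow> i \<in> {1..m} \<Longrightarrow>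
        (\<And>k j. k < j \<Longrightarrow> j \<le> n \<Longrightarrow> derivable m n (add_mset (i, ws k, ws j) Rs) G) \<Longrightarrow>
        derivable m n Rs G"

end

theory Submission
  imports Defs "HOL-Library.Countable"
begin

instance fm :: countable by countable_datatype

datatype task = TFm nat fm nat | TIOA "nat list" | TAPC nat "nat list"

instance task :: countable by countable_datatype

type_synonym sqt = "ratom multiset \<times> lfm multiset"

fun fm_ok :: "nat \<Rightarrow> nat \<Rightarrow> fm \<Rightarrow> nat \<Rightarrow> ratom multiset \<Rightarrow> ratom multiset \<Rightarrow> lfm multiset \<Rightarrow> bool" where
  "fm_ok m w (Pos p) u Rs Rs' G' = True"
| "fm_ok m w (Neg p) u Rs Rs' G' = True"
| "fm_ok m w (Conj a b) u Rs Rs' G' = ((w,a) \<in># G' \<or> (w,b) \<in># G')"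
| "fm_ok m w (Disj a b) u Rs Rs' G' = ((w,a) \<in># G' \<and> (w,b) \<in># G')"
| "fm_ok m w (Box a) u Rs Rs' G' = (\<exists>v. (v,a) \<in># G')"
| "fm_ok m w (Dia a) u Rs Rs' G' = ((u,a) \<in># G')"
| "fm_ok m w (Stit i a) u Rs Rs' G' = (i \<in> {1..m} \<longrightarrow> (\<exists>v. (i,w,v) \<in># Rs' \<and> (v,a) \<in># G'))"
| "fm_ok m w (DStit i a) u Rs Rs' G' = (i \<in> {1..m} \<and> (w,u) \<in> (rel_conn i Rs)\<^sup>* \<longrightarrow> (u,a) \<in># G')"

fun task_ok :: "nat \<Rightarrow> nat \<Rightarrow> task \<Rightarrow> sqt \<Rightarrow> sqt \<Rightarrow> bool" where
  "task_ok m n (TFm w \<phi> u) S S' = ((w,\<phi>) \<in># snd S \<longrightarrow> fm_ok m w \<phi> u (fst S) (fst S') (snd S'))"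
| "task_ok m n (TIOA us) S S' = (\<exists>v. \<forall>i\<in>{1..m}. (i, us!i, v) \<in># fst S')"
| "task_ok m n (TAPC i ws) S S' = (0 < n \<and> i \<in> {1..m} \<longrightarrow> (\<exists>k j. k < j \<and> j \<le> n \<and> (i, ws!k, ws!j) \<in># fst S'))"

definition ext_ok :: "nat \<Rightarrow> nat \<Rightarrow> task \<Rightarrow> sqt \<Rightarrow> sqt \<Rightarrow> bool" where
  "ext_ok m n t S S' \<longleftrightarrow> set_mset (fst S) \<subseteq> set_mset (fst S') \<and> set_mset (snd S) \<subseteq> set_mset (snd S')
     \<and> \<not> derivable m n (fst S') (snd S') \<and> task_ok m n t S S'"

lemma finite_labels: "finite (labels Rs G)"
  unfolding labels_def by auto

lemma fresh: "\<exists>v. v \<notin> labels Rs G"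
  using finite_labels ex_new_if_finite[of "labels Rs G"] by auto

lemma ext_exists:
  assumes nd: "\<not> derivable m n Rs G"
  shows "\<exists>S'. ext_ok m n t (Rs,G) S'"
proof (cases t)
  case (TFm w \<phi> u)
  show ?thesis
  proof (cases "(w,\<phi>) \<in># G")
    case False
    then show ?thesis using nd TFm by (intro exI[of _ "(Rs,G)"]) (auto simp: ext_ok_def)
  next
    case True
    then obtain G0 where G: "G = add_mset (w,\<phi>) G0" by (metis multi_member_split)
    show ?thesis
    proof (cases \<phi>)
      case (Pos p) then show ?thesis using nd TFm by (intro exI[of _ "(Rs,G)"]) (auto simp: ext_ok_def)
    next
      case (Neg p) then show ?thesis using nd TFm by (intro exI[of _ "(Rs,G)"]) (auto simp: ext_ok_def)
    next
      case (Conj a b)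
      have "\<not> derivable m n Rs (add_mset (w,a) G) \<or> \<not> derivable m n Rs (add_mset (w,b) G)"
      proof (rule ccontr)
        assume "\<not> ?thesis"
        hence "derivable m n Rs ({#(w, Conj a b), (w, a)#} + G0)"
          "derivable m n Rs ({#(w, Conj a b), (w, b)#} + G0)" using G Conj by (auto simp: add_mset_commute)
        hence "derivable m n Rs G" using G Conj derivable.conj by blast
        thus False using nd by simp
      qed
      then show ?thesis
      proof
        assume "\<not> derivable m n Rs (add_mset (w,a) G)"
        then show ?thesis using TFm Conj by (intro exI[of _ "(Rs, add_mset (w,a) G)"]) (auto simp: ext_ok_def)
      next
        assume "\<not> derivable m n Rs (add_mset (w,b) G)"
        then show ?thesis using TFm Conj by (intro exI[of _ "(Rs, add_mset (w,b) G)"]) (auto simp: ext_ok_def)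
      qed
    next
      case (Disj a b)
      have "\<not> derivable m n Rs (add_mset (w,a) (add_mset (w,b) G))"
      proof
        assume "derivable m n Rs (add_mset (w,a) (add_mset (w,b) G))"
        hence "derivable m n Rs ({#(w, Disj a b), (w, a), (w, b)#} + G0)" using G Disj by (auto simp: add_mset_commute)
        hence "derivable m n Rs G" using G Disj derivable.disj by blast
        thus False using nd by simp
      qed
      then show ?thesis using TFm Disj by (intro exI[of _ "(Rs, add_mset (w,a) (add_mset (w,b) G))"]) (auto simp: ext_ok_def)
    next
      case (Box a)
      obtain v where v: "v \<notin> labels Rs G" using fresh by blast
      have "\<not> derivable m n Rs (add_mset (v,a) G)"
      proof
        assume "derivable m n Rs (add_mset (v,a) G)"
        hence "derivable m n Rs ({#(w, Box a), (v, a)#} + G0)" using G Box by (auto simp: add_mset_commute)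
        hence "derivable m n Rs G" using G Box v derivable.box by blast
        thus False using nd by simp
      qed
      then show ?thesis using TFm Box by (intro exI[of _ "(Rs, add_mset (v,a) G)"]) (auto simp: ext_ok_def)
    next
      case (Dia a)
      have "\<not> derivable m n Rs (add_mset (u,a) G)"
      proof
        assume "derivable m n Rs (add_mset (u,a) G)"
        hence "derivable m n Rs ({#(w, Dia a), (u, a)#} + G0)" using G Dia by (auto simp: add_mset_commute)
        hence "derivable m n Rs G" using G Dia derivable.dia by blast
        thus False using nd by simp
      qed
      then show ?thesis using TFm Dia by (intro exI[of _ "(Rs, add_mset (u,a) G)"]) (auto simp: ext_ok_def)
    next
      case (Stit i a)
      show ?thesis
      proof (cases "i \<in> {1..m}")
        case False
        then show ?thesis using nd TFm Stit by (intro exI[of _ "(Rs,G)"]) (auto simp: ext_ok_def)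
      next
        case True
        obtain v where v: "v \<notin> labels Rs G" using fresh by blast
        have "\<not> derivable m n (add_mset (i,w,v) Rs) (add_mset (v,a) G)"
        proof
          assume "derivable m n (add_mset (i,w,v) Rs) (add_mset (v,a) G)"
          hence "derivable m n (add_mset (i,w,v) Rs) ({#(w, Stit i a), (v, a)#} + G0)" using G Stit by (auto simp: add_mset_commute)
          hence "derivable m n Rs G" using G Stit v True derivable.stit by blast
          thus False using nd by simp
        qed
        then show ?thesis using TFm Stit by (intro exI[of _ "(add_mset (i,w,v) Rs, add_mset (v,a) G)"]) (auto simp: ext_ok_def)
      qed
    next
      case (DStit i a)
      show ?thesis
      proof (cases "i \<in> {1..m} \<and> (w,u) \<in> (rel_conn i Rs)\<^sup>*")
        case False
        then show ?thesis using nd TFm DStit by (intro exI[of _ "(Rs,G)"]) (auto simp: ext_ok_def)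
      next
        case True
        have "\<not> derivable m n Rs (add_mset (u,a) G)"
        proof
          assume "derivable m n Rs (add_mset (u,a) G)"
          hence "derivable m n Rs ({#(w, DStit i a), (u, a)#} + G0)" using G DStit by (auto simp: add_mset_commute)
          hence "derivable m n Rs G" using G DStit True derivable.pr by blast
          thus False using nd by simp
        qed
        then show ?thesis using TFm DStit by (intro exI[of _ "(Rs, add_mset (u,a) G)"]) (auto simp: ext_ok_def)
      qed
    qed
  qed
next
  case (TIOA us)
  obtain v where v: "v \<notin> labels Rs G" using fresh by blast
  let ?Rs = "Rs + mset (map (\<lambda>i. (i, us!i, v)) [1..<Suc m])"
  have "\<not> derivable m n ?Rs G"
    using nd v derivable.ioa[of v Rs G m n "\<lambda>i. us!i"] by blast
  moreover have "\<forall>i\<in>{1..m}. (i, us!i, v) \<in># ?Rs"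
  proof
    fix i assume "i \<in> {1..m}"
    hence "(i, us!i, v) \<in> set (map (\<lambda>i. (i, us!i, v)) [1..<Suc m])" by (force simp del: upt_Suc)
    thus "(i, us!i, v) \<in># ?Rs" by simp
  qed
  ultimately show ?thesis using TIOA by (intro exI[of _ "(?Rs, G)"]) (auto simp: ext_ok_def)
next
  case (TAPC i ws)
  show ?thesis
  proof (cases "0 < n \<and> i \<in> {1..m}")
    case False
    then show ?thesis using nd TAPC by (intro exI[of _ "(Rs,G)"]) (auto simp: ext_ok_def)
  next
    case True
    have "\<exists>k j. k < j \<and> j \<le> n \<and> \<not> derivable m n (add_mset (i, ws!k, ws!j) Rs) G"
      using nd True derivable.apc[of n i m "\<lambda>k. ws!k" Rs G] by blast
    then obtain k j where kj: "k < j" "j \<le> n" "\<not> derivable m n (add_mset (i, ws!k, ws!j) Rs) G" by blast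
    then show ?thesis using TAPC by (intro exI[of _ "(add_mset (i, ws!k, ws!j) Rs, G)"]) (auto simp: ext_ok_def)
  qed
qed


definition task_at :: "nat \<Rightarrow> task" where
  "task_at k = from_nat (fst (prod_decode k))"

lemma task_at_fair: "\<exists>k\<ge>k0. task_at k = t"
  by (rule exI[of _ "prod_encode (to_nat t, k0)"]) (simp add: task_at_def le_prod_encode_2)

primrec sq :: "nat \<Rightarrow> nat \<Rightarrow> sqt \<Rightarrow> nat \<Rightarrow> sqt" where
  "sq m n S0 0 = S0"
| "sq m n S0 (Suc k) = (if \<exists>S'. ext_ok m n (task_at k) (sq m n S0 k) S'
      then SOME S'. ext_ok m n (task_at k) (sq m n S0 k) S' else sq m n S0 k)"

declare sq.simps(2)[simp del]

locale lim =
  fixes m n :: nat and S0 :: sqt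
  assumes nd0: "\<not> derivable m n (fst S0) (snd S0)" and m1: "m \<ge> 1"
begin

abbreviation "S k \<equiv> sq m n S0 k"

lemma step: "\<not> derivable m n (fst (S k)) (snd (S k)) \<and> (\<forall>j. j < k \<longrightarrow> ext_ok m n (task_at j) (S j) (S (Suc j)))"
proof (induction k)
  case 0 then show ?case using nd0 by simp
next
  case (Suc k)
  obtain R G where RG: "S k = (R,G)" by fastforce
  have ex: "\<exists>S'. ext_ok m n (task_at k) (S k) S'" using Suc ext_exists RG by (metis fst_conv snd_conv)
  hence e: "ext_ok m n (task_at k) (S k) (S (Suc k))" by (simp add: someI_ex sq.simps(2))
  hence "\<not> derivable m n (fst (S (Suc k))) (snd (S (Suc k)))" by (simp add: ext_ok_def)
  then show ?case using Suc e less_Suc_eq by auto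
qed

lemma ext: "ext_ok m n (task_at k) (S k) (S (Suc k))"
  using step[of "Suc k"] by auto

lemma ndk: "\<not> derivable m n (fst (S k)) (snd (S k))"
  using step by auto

lemma mono: "k \<le> k' \<Longrightarrow> set_mset (fst (S k)) \<subseteq> set_mset (fst (S k')) \<and> set_mset (snd (S k)) \<subseteq> set_mset (snd (S k'))"
proof (induction k' rule: dec_induct)
  case base then show ?case by simp
next
  case (step j)
  have "set_mset (fst (S j)) \<subseteq> set_mset (fst (S (Suc j)))" "set_mset (snd (S j)) \<subseteq> set_mset (snd (S (Suc j)))"
    using ext[of j] unfolding ext_ok_def by blast+
  then show ?case using step.IH by blast
qed

definition LR where "LR = (\<Union>k. set_mset (fst (S k)))"
definition LG where "LG = (\<Union>k. set_mset (snd (S k)))"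

definition E where "E i = {(x,y). (i,x,y) \<in> LR \<or> (i,y,x) \<in> LR}"
definition W where "W = {y. \<exists>i x. (i,x,y) \<in> LR \<or> (i,y,x) \<in> LR} \<union> fst ` LG"
definition R where "R i = {(x,y). x \<in> W \<and> (x,y) \<in> (E i)\<^sup>*}"
definition V where "V p = {w. (w, Neg p) \<in> LG}"

lemma fm_task:
  assumes "(w,\<psi>) \<in> LG"
  shows "\<exists>k\<ge>k0. fm_ok m w \<psi> u (fst (S k)) (fst (S (Suc k))) (snd (S (Suc k)))"
proof -
  obtain k1 where k1: "(w,\<psi>) \<in># snd (S k1)" using assms by (auto simp: LG_def)
  obtain k where k: "k \<ge> max k0 k1" "task_at k = TFm w \<psi> u" using task_at_fair by blast
  have "(w,\<psi>) \<in># snd (S k)" using mono[of k1 k] k k1 by auto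
  then show ?thesis using ext[of k] k by (auto simp: ext_ok_def)
qed

lemma inLG: "x \<in># snd (S k) \<Longrightarrow> x \<in> LG" by (auto simp: LG_def)
lemma inLR: "x \<in># fst (S k) \<Longrightarrow> x \<in> LR" by (auto simp: LR_def)

lemma no_id: "(w, Pos p) \<in> LG \<Longrightarrow> (w, Neg p) \<in> LG \<Longrightarrow> False"
proof -
  assume a: "(w, Pos p) \<in> LG" "(w, Neg p) \<in> LG"
  obtain k1 k2 where "(w, Pos p) \<in># snd (S k1)" "(w, Neg p) \<in># snd (S k2)" using a by (auto simp: LG_def)
  hence b: "(w, Pos p) \<in># snd (S (max k1 k2))" "(w, Neg p) \<in># snd (S (max k1 k2))"
    using mono[of k1 "max k1 k2"] mono[of k2 "max k1 k2"] by auto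
  then obtain G1 where "snd (S (max k1 k2)) = add_mset (w, Pos p) G1" by (metis multi_member_split)
  moreover have "(w, Neg p) \<in># G1" using b calculation by auto
  then obtain G2 where "G1 = add_mset (w, Neg p) G2" by (metis multi_member_split)
  ultimately have "snd (S (max k1 k2)) = {#(w, Pos p), (w, Neg p)#} + G2" by simp
  hence "derivable m n (fst (S (max k1 k2))) (snd (S (max k1 k2)))"
    using derivable.id[of m n "fst (S (max k1 k2))" w p G2] by simp
  thus False using ndk by blast
qed

lemma E_conn: "(w,u) \<in> (E i)\<^sup>* \<Longrightarrow> \<exists>k. (w,u) \<in> (rel_conn i (fst (S k)))\<^sup>*"
proof (induction rule: rtrancl_induct)
  case base then show ?case by auto
next
  case (step y z)
  obtain k where k: "(w,y) \<in> (rel_conn i (fst (S k)))\<^sup>*" using step by blast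
  obtain k' where k': "(y,z) \<in> rel_conn i (fst (S k'))" using step(2)
    by (auto simp: E_def LR_def rel_conn_def)
  have sub: "rel_conn i (fst (S k)) \<subseteq> rel_conn i (fst (S (max k k')))"
        "rel_conn i (fst (S k')) \<subseteq> rel_conn i (fst (S (max k k')))"
    using mono[of k "max k k'"] mono[of k' "max k k'"] by (auto simp: rel_conn_def)
  have "(w,y) \<in> (rel_conn i (fst (S (max k k'))))\<^sup>*" using k rtrancl_mono[OF sub(1)] by blast
  moreover have "(y,z) \<in> rel_conn i (fst (S (max k k')))" using k' sub(2) by blast
  ultimately show ?case by (meson rtrancl.rtrancl_into_rtrancl)
qed

lemma E_W: "(x,y) \<in> (E i)\<^sup>* \<Longrightarrow> x \<in> W \<Longrightarrow> y \<in> W"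
  by (induction rule: rtrancl_induct) (auto simp: E_def W_def)

lemma E_sym: "sym (E i)" by (auto simp: E_def sym_def)

lemma equiv_R: "equiv W (R i)"
proof (rule equivI)
  show "R i \<subseteq> W \<times> W" using E_W by (auto simp: R_def)
  show "refl_on W (R i)" by (auto simp: R_def refl_on_def)
  show "sym (R i)"
    unfolding R_def sym_def using E_W sym_rtrancl[OF E_sym] by (auto simp: sym_def)
  show "trans (R i)"
    unfolding R_def trans_def by auto
qed

lemma truth: "agents \<psi> \<subseteq> {1..m} \<Longrightarrow> (w,\<psi>) \<in> LG \<Longrightarrow> \<not> sat W R V w \<psi>"
proof (induction \<psi> arbitrary: w)
  case (Pos p) then show ?case using no_id by (auto simp: V_def)
next
  case (Neg p) then show ?case by (auto simp: V_def)
next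
  case (Conj a b)
  obtain k where "fm_ok m w (Conj a b) 0 (fst (S k)) (fst (S (Suc k))) (snd (S (Suc k)))"
    using fm_task[OF Conj.prems(2)] by blast
  then show ?case using Conj inLG by auto
next
  case (Disj a b)
  obtain k where "fm_ok m w (Disj a b) 0 (fst (S k)) (fst (S (Suc k))) (snd (S (Suc k)))"
    using fm_task[OF Disj.prems(2)] by blast
  then show ?case using Disj inLG by auto
next
  case (Box a)
  obtain k where "fm_ok m w (Box a) 0 (fst (S k)) (fst (S (Suc k))) (snd (S (Suc k)))"
    using fm_task[OF Box.prems(2)] by blast
  then obtain v where "(v,a) \<in> LG" using inLG by auto
  moreover have "v \<in> W" using calculation by (force simp: W_def)
  ultimately show ?case using Box by auto
next
  case (Dia a)
  have "\<not> sat W R V u a" for u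
  proof -
    obtain k where "fm_ok m w (Dia a) u (fst (S k)) (fst (S (Suc k))) (snd (S (Suc k)))"
      using fm_task[OF Dia.prems(2)] by blast
    then show ?thesis using Dia inLG by auto
  qed
  then show ?case by simp
next
  case (Stit i a)
  have i: "i \<in> {1..m}" using Stit by auto
  obtain k where "fm_ok m w (Stit i a) 0 (fst (S k)) (fst (S (Suc k))) (snd (S (Suc k)))"
    using fm_task[OF Stit.prems(2)] by blast
  then obtain v where "(i,w,v) \<in># fst (S (Suc k))" "(v,a) \<in># snd (S (Suc k))" using i by auto
  hence v: "(i,w,v) \<in> LR" "(v,a) \<in> LG" using inLG inLR by blast+
  have "w \<in> W" using Stit.prems(2) by (force simp: W_def)
  hence "(w,v) \<in> R i" using v by (auto simp: R_def E_def)
  then show ?case using Stit v by auto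
next
  case (DStit i a)
  have i: "i \<in> {1..m}" using DStit by auto
  have "\<not> sat W R V u a" if wu: "(w,u) \<in> R i" for u
  proof -
    obtain k0 where k0: "(w,u) \<in> (rel_conn i (fst (S k0)))\<^sup>*" 
      using wu E_conn[of w u i] unfolding R_def by blast
    obtain k where k: "k \<ge> k0" "fm_ok m w (DStit i a) u (fst (S k)) (fst (S (Suc k))) (snd (S (Suc k)))"
      using fm_task[OF DStit.prems(2)] by blast
    have "rel_conn i (fst (S k0)) \<subseteq> rel_conn i (fst (S k))"
      using mono[OF k(1)] by (auto simp: rel_conn_def)
    hence "(w,u) \<in> (rel_conn i (fst (S k)))\<^sup>*" using k0 rtrancl_mono by blast
    then show ?thesis using k i DStit inLG by auto
  qed
  then show ?case by auto
qed

lemma frame: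
  assumes "x0 \<in> W"
  shows "ldm_frame m n W R"
  unfolding ldm_frame_def
proof (intro conjI allI impI ballI)
  show "W \<noteq> {}" using assms by auto
  show "equiv W (R i)" for i by (rule equiv_R)
next
  fix u :: "nat \<Rightarrow> nat" assume u: "\<forall>i\<in>{1..m}. u i \<in> W"
  obtain k where "task_at k = TIOA (map u [0..<Suc m])" using task_at_fair by blast
  then obtain v where v: "\<forall>i\<in>{1..m}. (i, (map u [0..<Suc m])!i, v) \<in># fst (S (Suc k))"
    using ext[of k] by (auto simp: ext_ok_def)
  have v2: "\<forall>i\<in>{1..m}. (i, u i, v) \<in> LR"
  proof
    fix i assume i: "i \<in> {1..m}"
    hence "(map u [0..<Suc m])!i = u i" by (simp del: upt_Suc)
    thus "(i, u i, v) \<in> LR" using v i inLR by metis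
  qed
  show "\<exists>v\<in>W. \<forall>i\<in>{1..m}. (u i, v) \<in> R i"
  proof (intro bexI ballI)
    have "(1, u 1, v) \<in> LR" using v2 m1 by auto
    then show "v \<in> W" unfolding W_def by blast
    show "(u i, v) \<in> R i" if "i \<in> {1..m}" for i using v2 u that by (auto simp: R_def E_def)
  qed
next
  fix i ws assume n: "0 < n" and i: "i \<in> {1..m}" and ws: "\<forall>k\<le>n. ws k \<in> W"
  obtain k where "task_at k = TAPC i (map ws [0..<Suc n])" using task_at_fair by blast
  then obtain a b where ab: "a < b" "b \<le> n" "(i, (map ws [0..<Suc n])!a, (map ws [0..<Suc n])!b) \<in># fst (S (Suc k))"
    using ext[of k] n i by (auto simp: ext_ok_def)
  have "(map ws [0..<Suc n])!a = ws a" "(map ws [0..<Suc n])!b = ws b" using ab by (simp_all del: upt_Suc)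
  hence "(i, ws a, ws b) \<in> LR" using ab inLR by metis
  moreover have "ws a \<in> W" using ws ab by auto
  ultimately have "(ws a, ws b) \<in> R i" by (auto simp: R_def E_def)
  then show "\<exists>k j. k < j \<and> j \<le> n \<and> (ws k, ws j) \<in> R i" using ab by blast
qed

end

theorem theorem3:
  fixes m n x :: nat and \<phi> :: fm
  assumes "m \<ge> 1" and "in_lang m \<phi>" and "valid m n \<phi>"
  shows "derivable m n {#} {#(x, \<phi>)#}"
proof (rule ccontr)
  assume nd: "\<not> derivable m n {#} {#(x, \<phi>)#}"
  interpret L: lim m n "({#}, {#(x, \<phi>)#})" using nd assms(1) by unfold_locales auto
  have xL: "(x, \<phi>) \<in> L.LG" using L.inLG[of "(x,\<phi>)" 0] by simp
  hence xW: "x \<in> L.W" by (force simp: L.W_def)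
  have "ldm_frame m n L.W L.R" using L.frame[OF xW] .
  hence "sat L.W L.R L.V x \<phi>" using assms(3) xW unfolding valid_def by blast
  moreover have "\<not> sat L.W L.R L.V x \<phi>" using L.truth xL assms(2) by (auto simp: in_lang_def)
  ultimately show False by contradiction
qed

end
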